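(* Let $a\ge0$. (i) If $f\in\mathcal{A}_a$ and $g\in\mathcal{A}_b$ ($b\ge0$), then $fg\in\mathcal{A}_{a+b}$. (ii) Let $f\in\mathcal{A}_a$ and let $g$ be an entire function such that, for some fixed $r_0\ge0$, the function $\lambda(r,r_0)=\log M_g(r)-\log M_f(r+r_0)$ is bounded as a function of $r\in[0,\infty)$. Then $g\in\mathcal{A}_a$.
   Context: For entire $f$: $M_f(r)=\sup_{|z|\le r}|f(z)|$; for $b>0$, $\|f\|_b=\sup_{k\in\mathbb{N}_0}b^{-k}|f^{(k)}(0)|$; for $a\ge0$, $\mathcal{A}_a=\{f \text{ entire}:\|f\|_b<\infty\ \forall b>a\}$. *)

theory Defs
  imports "HOL-Complex_Analysis.Complex_Analysis"
begin

definition entire :: "(complex \<Rightarrow> complex) \<Rightarrow> bool" where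
  "entire f \<longleftrightarrow> f holomorphic_on UNIV"

definition max_mod :: "(complex \<Rightarrow> complex) \<Rightarrow> real \<Rightarrow> real" where
  "max_mod f r = (SUP z\<in>cball 0 r. norm (f z))"

text \<open>||f||_b < infinity: the sequence b^(-k) |f^(k)(0)| is bounded above.\<close>
definition norm_b_finite :: "real \<Rightarrow> (complex \<Rightarrow> complex) \<Rightarrow> bool" where
  "norm_b_finite b f \<longleftrightarrow> bdd_above (range (\<lambda>k::nat. norm ((deriv ^^ k) f 0) / b ^ k))"

definition class_A :: "real \<Rightarrow> (complex \<Rightarrow> complex) set" where
  "class_A a = {f. entire f \<and> (\<forall>b>a. norm_b_finite b f)}"

end

theory Submission imports Defs begin

lemma fact_exp_bound:
  fixes n :: nat
  assumes "n \<ge> 1"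
  shows "fact n * exp (real n) \<le> exp 1 * real n ^ (n+1)"
  using assms
proof (induction n rule: dec_induct)
  case base
  then show ?case by simp
next
  case (step n)
  have n: "real n \<ge> 1" using step by simp
  have "real n / (real n + 1) \<le> exp (- 1 / (real n + 1))"
  proof -
    have "1 + (- 1 / (real n + 1)) \<le> exp (- 1 / (real n + 1))" by (rule exp_ge_add_one_self)
    moreover have "1 + (- 1 / (real n + 1)) = real n / (real n + 1)" using n by (simp add: field_simps)
    ultimately show ?thesis by simp
  qed
  then have "(real n / (real n + 1)) ^ (n+1) \<le> exp (- 1 / (real n + 1)) ^ (n+1)"
    by (intro power_mono) auto
  also have "\<dots> = exp (real (n+1) * (- 1 / (real n + 1)))" by (rule exp_of_nat_mult[symmetric])
  also have "\<dots> = exp (-1)" using n by (simp add: field_simps)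
  finally have "real n ^ (n+1) / (real n + 1) ^ (n+1) \<le> exp (-1)" by (simp add: power_divide)
  moreover have pos: "(real n + 1)^(n+1) > 0" using n by simp
  ultimately have "real n ^ (n+1) \<le> exp (-1) * (real n + 1)^(n+1)"
    by (simp only: pos_divide_le_eq[OF pos])
  then have "exp 1 * real n ^ (n+1) \<le> exp 1 * (exp (-1) * (real n + 1)^(n+1))"
    by (intro mult_left_mono) auto
  also have "\<dots> = (real n + 1)^(n+1)" by (simp add: exp_minus)
  finally have key: "exp 1 * real n ^ (n+1) \<le> (real n + 1) ^ (n+1)" .
  have "fact (Suc n) * exp (real (Suc n)) = (real n + 1) * exp 1 * (fact n * exp (real n))"
    by (simp add: exp_add algebra_simps)
  also have "\<dots> \<le> (real n + 1) * exp 1 * (exp 1 * real n ^ (n+1))"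
    using step.IH by (intro mult_left_mono) auto
  also have "\<dots> \<le> (real n + 1) * exp 1 * (real n + 1) ^ (n+1)"
    using key by (intro mult_left_mono) auto
  also have "\<dots> = exp 1 * real (Suc n) ^ (Suc n + 1)" by (simp add: algebra_simps)
  finally show ?case .
qed

lemma lin_pow_bound:
  fixes b b' :: real and k :: nat
  assumes "0 < b" "b < b'"
  shows "real k * b ^ k \<le> b' ^ k / (b' / b - 1)"
proof -
  let ?x = "b' / b - 1"
  have x: "?x > 0" using assms by (simp add: field_simps)
  have "1 + real k * ?x \<le> (1 + ?x) ^ k" by (rule Bernoulli_inequality) (use x in simp)
  then have "real k * ?x \<le> (b' / b) ^ k" by simp
  then have "real k \<le> (b'/b)^k / ?x" by (simp only: pos_le_divide_eq[OF x])
  then have "real k * b ^ k \<le> (b'/b)^k / ?x * b ^ k" using assms by (intro mult_right_mono) auto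
  also have "\<dots> = b' ^ k / ?x" using assms by (simp add: power_divide)
  finally show ?thesis .
qed

lemma growth_bound:
  fixes f :: "complex \<Rightarrow> complex"
  assumes ent: "entire f" and b: "b > 0"
    and co: "\<And>k. norm ((deriv ^^ k) f 0) \<le> B * b ^ k"
  shows "norm (f w) \<le> B * exp (b * norm w)"
proof -
  let ?t = "\<lambda>n. (deriv ^^ n) f 0 / (fact n) * (w - 0)^n"
  let ?u = "\<lambda>n. B * ((b * norm w) ^ n / fact n)"
  have hol: "f holomorphic_on ball 0 (norm w + 1)"
    using ent unfolding entire_def by (auto intro: holomorphic_on_subset)
  have s: "?t sums f w"
    by (rule holomorphic_power_series[OF hol]) simp
  have eu: "?u sums (B * exp (b * norm w))"
  proof -
    have "(\<lambda>n. (b * norm w) ^ n /\<^sub>R fact n) sums exp (b * norm w)"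
      by (rule exp_converges)
    then have "(\<lambda>n. (b * norm w) ^ n / fact n) sums exp (b * norm w)"
      by (simp add: divide_inverse_commute scaleR_conv_of_real mult.commute)
    then show ?thesis by (rule sums_mult)
  qed
  have le: "norm (?t n) \<le> ?u n" for n
  proof -
    have "norm (?t n) = norm ((deriv ^^ n) f 0) * norm w ^ n / fact n"
      by (simp add: norm_mult norm_divide norm_power)
    also have "\<dots> \<le> B * b ^ n * norm w ^ n / fact n"
      by (intro divide_right_mono mult_right_mono co) auto
    also have "\<dots> = ?u n" by (simp add: power_mult_distrib)
    finally show ?thesis .
  qed
  have sn: "summable (\<lambda>n. norm (?t n))"
    by (rule summable_comparison_test'[OF sums_summable[OF eu]]) (use le in auto)
  have "norm (f w) = norm (suminf ?t)" using s sums_unique by metis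
  also have "\<dots> \<le> (\<Sum>n. norm (?t n))" by (rule summable_norm[OF sn])
  also have "\<dots> \<le> suminf ?u" by (rule suminf_le[OF le sn sums_summable[OF eu]])
  also have "\<dots> = B * exp (b * norm w)" using eu sums_unique by metis
  finally show ?thesis .
qed
lemma coef_bound:
  fixes g :: "complex \<Rightarrow> complex"
  assumes ent: "entire g" and b: "0 < b" "b < b'" and K: "K \<ge> 0"
    and gr: "\<And>z. norm (g z) \<le> K * exp (b * norm z)"
  shows "norm_b_finite b' g"
proof -
  let ?x = "b' / b - 1"
  have x: "?x > 0" using b by (simp add: field_simps)
  have b'p: "b' > 0" using b by simp
  have bnd: "norm ((deriv ^^ k) g 0) / b' ^ k \<le> K + K * exp 1 / ?x" for k
  proof (cases "k = 0")
    case True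
    have "norm (g 0) \<le> K" using gr[of 0] by simp
    moreover have "0 \<le> K * exp 1 / ?x" using K x by simp
    ultimately show ?thesis using True by simp
  next
    case False
    define r where "r = real k / b"
    have r: "r > 0" using False b by (simp add: r_def)
    have "norm ((deriv ^^ k) g 0) \<le> fact k * (K * exp (b * r)) / r ^ k"
    proof (rule Cauchy_inequality)
      show "g holomorphic_on ball 0 r" using ent unfolding entire_def by (auto intro: holomorphic_on_subset)
      show "continuous_on (cball 0 r) g" using ent unfolding entire_def
        by (auto intro: holomorphic_on_imp_continuous_on continuous_on_subset)
      show "0 < r" by (rule r)
      show "norm (g z) \<le> K * exp (b * r)" if "norm (0 - z) = r" for z
        using gr[of z] that by simp
    qed
    also have "\<dots> = K * (fact k * exp (real k)) * b ^ k / real k ^ k"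
      using b by (simp add: r_def power_divide)
    also have "\<dots> \<le> K * (exp 1 * real k ^ (k+1)) * b ^ k / real k ^ k"
      using False K b by (intro divide_right_mono mult_right_mono mult_left_mono fact_exp_bound) auto
    also have "\<dots> = K * exp 1 * (real k * b ^ k)"
      using False by (simp add: field_simps)
    also have "\<dots> \<le> K * exp 1 * (b' ^ k / ?x)"
      using K by (intro mult_left_mono lin_pow_bound b) auto
    finally have "norm ((deriv ^^ k) g 0) / b' ^ k \<le> K * exp 1 * (b' ^ k / ?x) / b' ^ k"
      using b'p by (intro divide_right_mono) auto
    also have "\<dots> = K * exp 1 / ?x" using b'p by simp
    also have "\<dots> \<le> K + K * exp 1 / ?x" using K by simp
    finally show ?thesis .
  qed
  then show ?thesis unfolding norm_b_finite_def by (intro bdd_aboveI2) 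
qed

lemma classA_coef:
  assumes "f \<in> class_A a" "b > a" "a \<ge> 0"
  obtains B where "B \<ge> 0" "\<And>k. norm ((deriv ^^ k) f 0) \<le> B * b ^ k"
proof -
  have bp: "b > 0" using assms by simp
  from assms have "bdd_above (range (\<lambda>k::nat. norm ((deriv ^^ k) f 0) / b ^ k))"
    unfolding class_A_def norm_b_finite_def by auto
  then obtain B where B: "\<And>k. norm ((deriv ^^ k) f 0) / b ^ k \<le> B"
    by (auto simp: bdd_above_def)
  have "\<And>k. norm ((deriv ^^ k) f 0) \<le> B * b ^ k"
    using B bp by (simp add: pos_divide_le_eq)
  moreover have "B \<ge> 0"
  proof -
    have "norm (f 0) \<le> B" using B[of 0] by simp
    then show ?thesis by (meson norm_ge_zero order_trans)
  qed
  ultimately show ?thesis using that by blast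
qed

lemma mm_upper:
  assumes "entire g" "norm z \<le> r"
  shows "norm (g z) \<le> max_mod g r"
proof -
  have "continuous_on (cball 0 r) g" using assms(1) unfolding entire_def
    by (auto intro: holomorphic_on_imp_continuous_on continuous_on_subset)
  then have "compact (g ` cball 0 r)" by (intro compact_continuous_image) auto
  then obtain M where M: "\<And>x. x \<in> g ` cball 0 r \<Longrightarrow> norm x \<le> M"
    using compact_imp_bounded bounded_iff by metis
  have "bdd_above ((\<lambda>z. norm (g z)) ` cball 0 r)"
    using M by (intro bdd_aboveI2[where M=M]) auto
  moreover have "z \<in> cball 0 r" using assms by simp
  ultimately show ?thesis unfolding max_mod_def by (rule cSUP_upper2) simp
qed

lemma mm_le:
  assumes "r \<ge> 0" "\<And>z. norm z \<le> r \<Longrightarrow> norm (f z) \<le> M"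
  shows "max_mod f r \<le> M"
  unfolding max_mod_def using assms by (intro cSUP_least) auto

theorem proposition2p2:
  fixes a :: real
  assumes "a \<ge> 0"
  shows "(\<forall>b f g. b \<ge> 0 \<longrightarrow> f \<in> class_A a \<longrightarrow> g \<in> class_A b \<longrightarrow>
            (\<lambda>z. f z * g z) \<in> class_A (a + b))
       \<and> (\<forall>f g r0. f \<in> class_A a \<longrightarrow> entire g \<longrightarrow> r0 \<ge> 0 \<longrightarrow>
            (\<exists>C. \<forall>r\<ge>0. \<bar>ln (max_mod g r) - ln (max_mod f (r + r0))\<bar> \<le> C) \<longrightarrow>
            g \<in> class_A a)"
proof (intro conjI allI impI)
  fix b :: real and f g :: "complex \<Rightarrow> complex"
  assume b: "b \<ge> 0" and f: "f \<in> class_A a" and g: "g \<in> class_A b"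
  have ef: "f holomorphic_on UNIV" and eg: "g holomorphic_on UNIV"
    using f g by (auto simp: class_A_def entire_def)
  have "entire (\<lambda>z. f z * g z)" unfolding entire_def
    using ef eg by (intro holomorphic_on_mult)
  moreover have "norm_b_finite c (\<lambda>z. f z * g z)" if c: "c > a + b" for c
  proof -
    define e where "e = (c - a - b) / 2"
    have e: "e > 0" using c by (simp add: e_def)
    obtain A where A: "A \<ge> 0" "\<And>k. norm ((deriv ^^ k) f 0) \<le> A * (a + e) ^ k"
      using classA_coef[OF f _ assms, of "a + e"] e by auto
    obtain B where B: "B \<ge> 0" "\<And>k. norm ((deriv ^^ k) g 0) \<le> B * (b + e) ^ k"
      using classA_coef[OF g _ b, of "b + e"] e by auto
    have cp: "c > 0" using c assms b by simp
    have "norm ((deriv ^^ n) (\<lambda>w. f w * g w) 0) / c ^ n \<le> A * B" for n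
    proof -
      have "norm ((deriv ^^ n) (\<lambda>w. f w * g w) 0)
          = norm (\<Sum>i = 0..n. of_nat (n choose i) * (deriv ^^ i) f 0 * (deriv ^^ (n-i)) g 0)"
        by (subst higher_deriv_mult[OF ef eg]) auto
      also have "\<dots> \<le> (\<Sum>i = 0..n. norm (of_nat (n choose i) * (deriv ^^ i) f 0 * (deriv ^^ (n-i)) g 0))"
        by (rule norm_sum)
      also have "\<dots> \<le> (\<Sum>i = 0..n. real (n choose i) * (A * (a + e) ^ i) * (B * (b + e) ^ (n - i)))"
      proof (rule sum_mono)
        fix i assume "i \<in> {0..n}"
        have "norm (of_nat (n choose i) * (deriv ^^ i) f 0 * (deriv ^^ (n-i)) g 0)
            = real (n choose i) * norm ((deriv ^^ i) f 0) * norm ((deriv ^^ (n-i)) g 0)"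
          by (simp add: norm_mult)
        also have "\<dots> \<le> real (n choose i) * (A * (a + e) ^ i) * (B * (b + e) ^ (n - i))"
          using A B assms b e by (intro mult_mono mult_left_mono) auto
        finally show "norm (of_nat (n choose i) * (deriv ^^ i) f 0 * (deriv ^^ (n-i)) g 0)
            \<le> real (n choose i) * (A * (a + e) ^ i) * (B * (b + e) ^ (n - i))" .
      qed
      also have "\<dots> = A * B * (\<Sum>i\<le>n. real (n choose i) * (a + e) ^ i * (b + e) ^ (n - i))"
        by (simp add: sum_distrib_left atLeast0AtMost algebra_simps)
      also have "\<dots> = A * B * ((a + e) + (b + e)) ^ n"
        by (simp only: binomial_ring[of "a + e" "b + e" n])
      also have "\<dots> = A * B * c ^ n" by (simp add: e_def)
      finally show ?thesis using cp by (simp add: pos_divide_le_eq)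
    qed
    then show ?thesis unfolding norm_b_finite_def by (intro bdd_aboveI2)
  qed
  ultimately show "(\<lambda>z. f z * g z) \<in> class_A (a + b)" unfolding class_A_def by blast
next
  fix f g :: "complex \<Rightarrow> complex" and r0 :: real
  assume f: "f \<in> class_A a" and eg: "entire g" and r0: "r0 \<ge> 0"
    and "\<exists>C. \<forall>r\<ge>0. \<bar>ln (max_mod g r) - ln (max_mod f (r + r0))\<bar> \<le> C"
  then obtain C where C: "\<And>r. r \<ge> 0 \<Longrightarrow> \<bar>ln (max_mod g r) - ln (max_mod f (r + r0))\<bar> \<le> C"
    by auto
  have ef: "entire f" using f by (simp add: class_A_def)
  have "norm_b_finite b' g" if b': "b' > a" for b'
  proof -
    define b where "b = (a + b') / 2"
    have bb: "b > a" "b < b'" "b > 0" using b' assms by (auto simp: b_def)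
    obtain A where A: "A \<ge> 0" "\<And>k. norm ((deriv ^^ k) f 0) \<le> A * b ^ k"
      using classA_coef[OF f bb(1) assms] by auto
    have fgr: "norm (f w) \<le> A * exp (b * norm w)" for w
      by (rule growth_bound[OF ef bb(3) A(2)])
    have mf: "max_mod f s \<le> A * exp (b * s)" if "s \<ge> 0" for s
    proof (rule mm_le[OF that])
      fix z :: complex assume "norm z \<le> s"
      then have "A * exp (b * norm z) \<le> A * exp (b * s)"
        using A bb by (intro mult_left_mono) (auto intro: mult_left_mono)
      then show "norm (f z) \<le> A * exp (b * s)" using fgr[of z] by linarith
    qed
    define K where "K = exp C * (1 + A * exp (b * r0))"
    have K: "K \<ge> 0" using A by (simp add: K_def)
    have "norm (g z) \<le> K * exp (b * norm z)" for z
    proof -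
      let ?r = "norm z"
      let ?G = "max_mod g ?r" and ?F = "max_mod f (?r + r0)"
      have G0: "?G \<ge> 0" using mm_upper[OF eg, of 0 ?r] by (simp, meson norm_ge_zero order_trans)
      have F0: "?F \<ge> 0" using mm_upper[OF ef, of 0 "?r + r0"] r0 by (simp, meson norm_ge_zero order_trans)
      have Cr: "\<bar>ln ?G - ln ?F\<bar> \<le> C" using C[of ?r] by simp
      have GF: "?G \<le> exp C * max 1 ?F"
      proof (cases "?G = 0")
        case True then show ?thesis by simp
      next
        case False
        then have Gp: "?G > 0" using G0 by simp
        have "?G = exp (ln ?G)" using Gp by simp
        also have "\<dots> \<le> exp (C + ln ?F)" using Cr by simp
        also have "\<dots> \<le> exp C * max 1 ?F"
        proof (cases "?F = 0")
          case True then show ?thesis by (simp)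
        next
          case False
          then have "?F > 0" using F0 by simp
          then show ?thesis by (simp add: exp_add)
        qed
        finally show ?thesis .
      qed
      have "max 1 ?F \<le> (1 + A * exp (b * r0)) * exp (b * ?r)"
      proof -
        have e1: "1 \<le> exp (b * ?r)" using bb by simp
        have "?F \<le> A * exp (b * (?r + r0))" using mf r0 by simp
        also have "\<dots> = A * exp (b * r0) * exp (b * ?r)" by (simp add: distrib_left exp_add)
        finally have "?F \<le> A * exp (b * r0) * exp (b * ?r)" .
        moreover have "0 \<le> A * exp (b * r0) * exp (b * ?r)" using A by simp
        moreover have "(1 + A * exp (b * r0)) * exp (b * ?r) = exp (b * ?r) + A * exp (b * r0) * exp (b * ?r)"
          by (simp add: algebra_simps)
        moreover have "0 \<le> exp (b * ?r)" by simp
        ultimately show ?thesis using e1 by (simp only: max_def, split if_split, linarith)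
      qed
      then have "exp C * max 1 ?F \<le> exp C * ((1 + A * exp (b * r0)) * exp (b * ?r))"
        by (intro mult_left_mono) auto
      with GF have "?G \<le> exp C * ((1 + A * exp (b * r0)) * exp (b * ?r))" by (rule order_trans)
      then have "?G \<le> K * exp (b * ?r)" by (simp add: K_def mult.assoc)
      moreover have "norm (g z) \<le> ?G" by (rule mm_upper[OF eg]) simp
      ultimately show ?thesis by linarith
    qed
    then show ?thesis by (intro coef_bound[OF eg bb(3) bb(2) K])
  qed
  then show "g \<in> class_A a" using eg by (simp add: class_A_def)
qed

end
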